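(* Let $A:\mathbb{R}^d\rightrightarrows\mathbb{R}^d$ be maximal monotone with $A^{-1}(0)\neq\emptyset$, let $p\geq1$ be an integer, $\sigma\in(0,1)$, $\theta>0$, $x_0\in\mathbb{R}^d$, and suppose $\lambda_k>0$, $y_k,v_k,x_k\in\mathbb{R}^d$, $\epsilon_k\geq0$ satisfy for every $k\geq0$: $v_{k+1}\in A^{\epsilon_{k+1}}(y_{k+1})$, $\|\lambda_{k+1}v_{k+1}+y_{k+1}-x_k\|^2+2\lambda_{k+1}\epsilon_{k+1}\leq\sigma^2\|y_{k+1}-x_k\|^2$, $\lambda_{k+1}\|y_{k+1}-x_k\|^{p-1}\geq\theta$, and $x_{k+1}=x_k-\lambda_{k+1}v_{k+1}$. Then for every integer $k\geq1$, \[ \inf_{1\leq i\leq k}\sqrt{\lambda_i}\|v_i\|\leq\sqrt{\tfrac{1+\sigma}{1-\sigma}}\Big(\sum_{i=1}^k\lambda_i\Big)^{-\frac12}\inf_{z^\star\in A^{-1}(0)}\|x_0-z^\star\|, \] \[ \inf_{1\leq i\leq k}\epsilon_i\leq\frac{\sigma^2}{2(1-\sigma^2)}\Big(\sum_{i=1}^k\lambda_i\Big)^{-1}\inf_{z^\star\in A^{-1}(0)}\|x_0-z^\star\|^2. \]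
   Context: The $\epsilon$-enlargement is $A^{\epsilon}(x)=\{v\in\mathbb{R}^d:\langle x-\tilde x,v-\tilde v\rangle\geq-\epsilon\ \forall\tilde x\in\mathbb{R}^d,\ \forall\tilde v\in A\tilde x\}$. *)

theory Defs
  imports "HOL-Analysis.Analysis"
begin

text \<open>Set-valued operators on a real inner product space are modelled as functions
  A :: 'a => 'a set; the graph of A is {(x,v). v in A x}.\<close>

definition monotone_op :: "('a::real_inner \<Rightarrow> 'a set) \<Rightarrow> bool" where
  "monotone_op A \<longleftrightarrow> (\<forall>x y u v. u \<in> A x \<longrightarrow> v \<in> A y \<longrightarrow> inner (x - y) (u - v) \<ge> 0)"

definition maximal_monotone :: "('a::real_inner \<Rightarrow> 'a set) \<Rightarrow> bool" where
  "maximal_monotone A \<longleftrightarrow> monotone_op A \<and>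
     (\<forall>B. monotone_op B \<and> (\<forall>x. A x \<subseteq> B x) \<longrightarrow> B = A)"

definition eps_enl :: "('a::real_inner \<Rightarrow> 'a set) \<Rightarrow> real \<Rightarrow> 'a \<Rightarrow> 'a set" where
  "eps_enl A \<epsilon> x = {v. \<forall>x' v'. v' \<in> A x' \<longrightarrow> inner (x - x') (v - v') \<ge> - \<epsilon>}"

definition zeros_op :: "('a::real_inner \<Rightarrow> 'a set) \<Rightarrow> 'a set" where
  "zeros_op A = {z. 0 \<in> A z}"

end

theory Submission imports Defs begin

lemma step:
  fixes x y v z :: "'a::real_inner"
  assumes "inner (y - z) v \<ge> - e" "(norm (l *\<^sub>R v + y - x))\<^sup>2 + 2*l*e \<le> s\<^sup>2 * (norm (y-x))\<^sup>2" "l > 0"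
  shows "(norm (z - (x - l *\<^sub>R v)))\<^sup>2 \<le> (norm (z-x))\<^sup>2 - (1 - s\<^sup>2) * (norm (y-x))\<^sup>2"
proof -
  have e1: "(norm (z - (x - l *\<^sub>R v)))\<^sup>2 = (norm (z-x))\<^sup>2 + 2*l*inner (z - y) v + ((norm (l *\<^sub>R v + y - x))\<^sup>2 - (norm (y-x))\<^sup>2)"
    unfolding power2_norm_eq_inner
    by (simp add: inner_diff_left inner_diff_right inner_add_left inner_add_right inner_commute algebra_simps)
  have "inner (z - y) v = - inner (y - z) v" by (simp add: inner_diff_left)
  then have "inner (z - y) v \<le> e" using assms(1) by simp
  then have "l * inner (z - y) v \<le> l * e"
    using assms(3) by (simp add: mult_left_mono)
  then show ?thesis using e1 assms(2) by (simp add: algebra_simps)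
qed

lemma vbound:
  fixes x y v :: "'a::real_normed_vector"
  assumes "(norm (l *\<^sub>R v + y - x))\<^sup>2 + 2*l*e \<le> s\<^sup>2 * (norm (y-x))\<^sup>2" "l > 0" "e \<ge> 0" "s > 0"
  shows "(l * norm v)\<^sup>2 \<le> (1+s)\<^sup>2 * (norm (y-x))\<^sup>2"
proof -
  have "norm (l *\<^sub>R v + y - x) \<le> s * norm (y-x)"
  proof -
    have "(norm (l *\<^sub>R v + y - x))\<^sup>2 \<le> (s * norm (y-x))\<^sup>2"
      using assms by (simp add: power_mult_distrib) (smt (verit) mult_nonneg_nonneg)
    then show ?thesis using assms(4) by (simp add: power2_le_iff_abs_le)
  qed
  moreover have "norm (l *\<^sub>R v) \<le> norm (l *\<^sub>R v + y - x) + norm (y - x)"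
    by (metis add_diff_cancel_right' diff_add_cancel norm_triangle_ineq4 add_diff_eq)
  ultimately have "l * norm v \<le> (1+s) * norm (y-x)" using assms(2) by (simp add: algebra_simps)
  moreover have "0 \<le> l * norm v" using assms by simp
  ultimately show ?thesis by (simp add: power_mono power_mult_distrib[symmetric])
qed

lemma inf_le:
  fixes f :: "'b \<Rightarrow> real"
  assumes "S \<noteq> {}" "\<And>z. z \<in> S \<Longrightarrow> f z \<ge> 0" "\<And>z. z \<in> S \<Longrightarrow> a \<le> c * f z" "c \<ge> 0"
  shows "a \<le> c * (INF z\<in>S. f z)"
proof (cases "c = 0")
  case True then show ?thesis using assms by auto
next
  case False
  then have c: "c > 0" using assms by simp
  have "a / c \<le> (INF z\<in>S. f z)"
    by (rule cINF_greatest) (use assms c in \<open>auto simp: divide_simps mult.commute\<close>)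
  then show ?thesis using c by (simp add: divide_simps mult.commute)
qed
theorem lemma4p2:
  fixes A :: "real ^ 'd \<Rightarrow> (real ^ 'd) set"
    and p :: nat and \<sigma> \<theta> :: real
    and lam eps :: "nat \<Rightarrow> real"
    and x y v :: "nat \<Rightarrow> real ^ 'd"
  assumes mm: "maximal_monotone A"
    and nz: "zeros_op A \<noteq> {}"
    and p: "p \<ge> 1"
    and sigma: "0 < \<sigma>" "\<sigma> < 1"
    and theta: "\<theta> > 0"
    and lam_pos: "\<And>k. lam (Suc k) > 0"
    and eps_nn: "\<And>k. eps (Suc k) \<ge> 0"
    and incl: "\<And>k. v (Suc k) \<in> eps_enl A (eps (Suc k)) (y (Suc k))"
    and err: "\<And>k. (norm (lam (Suc k) *\<^sub>R v (Suc k) + y (Suc k) - x k))\<^sup>2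
                    + 2 * lam (Suc k) * eps (Suc k) \<le> \<sigma>\<^sup>2 * (norm (y (Suc k) - x k))\<^sup>2"
    and large: "\<And>k. lam (Suc k) * norm (y (Suc k) - x k) ^ (p - 1) \<ge> \<theta>"
    and upd: "\<And>k. x (Suc k) = x k - lam (Suc k) *\<^sub>R v (Suc k)"
    and k: "k \<ge> 1"
  shows "((INF i\<in>{1..k}. sqrt (lam i) * norm (v i))
           \<le> sqrt ((1 + \<sigma>) / (1 - \<sigma>)) * (\<Sum>i=1..k. lam i) powr (-1/2)
             * (INF z\<in>zeros_op A. norm (x 0 - z)))
       \<and> ((INF i\<in>{1..k}. eps i)
           \<le> \<sigma>\<^sup>2 / (2 * (1 - \<sigma>\<^sup>2)) * inverse (\<Sum>i=1..k. lam i)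
             * (INF z\<in>zeros_op A. (norm (x 0 - z))\<^sup>2))"
proof -
  define r where "r i = (norm (y i - x (i - 1)))\<^sup>2" for i
  define S where "S = (\<Sum>i=1..k. lam i)"
  have Spos: "S > 0" unfolding S_def
    by (rule sum_pos) (use k lam_pos in \<open>auto simp: Suc_le_eq gr0_conv_Suc\<close>)
  have lampos: "lam i > 0" if "i \<in> {1..k}" for i
    using that lam_pos by (metis Suc_pred' atLeastAtMost_iff less_le_trans zero_less_one)
  have r_nn: "r i \<ge> 0" for i unfolding r_def by simp
  have s2: "\<sigma>\<^sup>2 < 1" using power_strict_mono[of "\<sigma>" 1 2] sigma by simp
  have vb: "(lam i * norm (v i))\<^sup>2 \<le> (1+\<sigma>)\<^sup>2 * r i" if "i \<in> {1..k}" for i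
  proof -
    have "i \<noteq> 0" using that by simp
    then obtain j where j: "i = Suc j" using not0_implies_Suc by blast
    have "(lam (Suc j) * norm (v (Suc j)))\<^sup>2 \<le> (1+\<sigma>)\<^sup>2 * (norm (y (Suc j) - x j))\<^sup>2"
      by (rule vbound[OF err[of j] lam_pos[of j] eps_nn[of j] sigma(1)])
    then show ?thesis unfolding j r_def by simp
  qed
  have eb: "lam i * eps i \<le> \<sigma>\<^sup>2 / 2 * r i" if "i \<in> {1..k}" for i
  proof -
    have "i \<noteq> 0" using that by simp
    then obtain j where j: "i = Suc j" using not0_implies_Suc by blast
    have "0 \<le> (norm (lam (Suc j) *\<^sub>R v (Suc j) + y (Suc j) - x j))\<^sup>2" by simp
    then have "2 * lam (Suc j) * eps (Suc j) \<le> \<sigma>\<^sup>2 * (norm (y (Suc j) - x j))\<^sup>2"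
      using err[of j] by linarith
    then show ?thesis unfolding j r_def by simp
  qed
  have main: "(1 - \<sigma>\<^sup>2) * (\<Sum>i=1..k. r i) \<le> (norm (x 0 - z))\<^sup>2" if z: "z \<in> zeros_op A" for z
  proof -
    have z0: "0 \<in> A z" using z by (simp add: zeros_op_def)
    have st: "(norm (z - x (Suc j)))\<^sup>2 \<le> (norm (z - x j))\<^sup>2 - (1 - \<sigma>\<^sup>2) * r (Suc j)" for j
    proof -
      have "inner (y (Suc j) - z) (v (Suc j) - 0) \<ge> - eps (Suc j)"
        using incl[of j] z0 unfolding eps_enl_def by blast
      then have "inner (y (Suc j) - z) (v (Suc j)) \<ge> - eps (Suc j)" by simp
      from step[OF this err[of j] lam_pos[of j]] show ?thesis unfolding upd r_def by simp
    qed
    have tele: "(1 - \<sigma>\<^sup>2) * (\<Sum>i=1..n. r i) \<le> (norm (z - x 0))\<^sup>2 - (norm (z - x n))\<^sup>2" for n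
    proof (induction n)
      case 0 then show ?case by simp
    next
      case (Suc n)
      then show ?case using st[of n] by (simp add: algebra_simps)
    qed
    have "(norm (z - x 0))\<^sup>2 = (norm (x 0 - z))\<^sup>2" by (simp add: norm_minus_commute)
    moreover have "0 \<le> (norm (z - x k))\<^sup>2" by simp
    ultimately show ?thesis using tele[of k] by linarith
  qed
  have ne: "{1..k} \<noteq> {}" using k by simp
  have finite: "finite {1..k}" by simp
  show ?thesis
  proof
    define m where "m = (INF i\<in>{1..k}. sqrt (lam i) * norm (v i))"
    have m_le: "m \<le> sqrt (lam i) * norm (v i)" if "i \<in> {1..k}" for i
      unfolding m_def by (rule cINF_lower) (use that in auto)
    have m_nn: "m \<ge> 0" unfolding m_def
      by (rule cINF_greatest) (use ne in \<open>auto intro!: mult_nonneg_nonneg real_sqrt_ge_zero less_imp_le[OF lampos]\<close>)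
    have "m\<^sup>2 * lam i \<le> (1+\<sigma>)\<^sup>2 * r i" if i: "i \<in> {1..k}" for i
    proof -
      have "m\<^sup>2 \<le> (sqrt (lam i) * norm (v i))\<^sup>2" using m_le[OF i] m_nn by (simp add: power_mono)
      also have "\<dots> = lam i * (norm (v i))\<^sup>2" using lampos[OF i] by (simp add: power_mult_distrib)
      finally have "m\<^sup>2 * lam i \<le> lam i * (norm (v i))\<^sup>2 * lam i"
        using lampos[OF i] by (simp add: mult_right_mono)
      also have "\<dots> = (lam i * norm (v i))\<^sup>2" by (simp add: power2_eq_square)
      finally show ?thesis using vb[OF i] by simp
    qed
    have mS: "m\<^sup>2 * S \<le> (1+\<sigma>)\<^sup>2 * (\<Sum>i=1..k. r i)"
      unfolding S_def sum_distrib_left by (rule sum_mono) (use \<open>\<And>i. i \<in> {1..k} \<Longrightarrow> m\<^sup>2 * lam i \<le> (1+\<sigma>)\<^sup>2 * r i\<close> in auto)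
    have Spow: "S powr (-1/2) = inverse (sqrt S)"
      using Spos by (simp add: powr_minus powr_half_sqrt[symmetric])
    show "m \<le> sqrt ((1 + \<sigma>) / (1 - \<sigma>)) * (\<Sum>i=1..k. lam i) powr (-1/2) * (INF z\<in>zeros_op A. norm (x 0 - z))"
      unfolding S_def[symmetric]
    proof (rule inf_le[OF nz])
      show "0 \<le> sqrt ((1 + \<sigma>) / (1 - \<sigma>)) * S powr (- 1 / 2)" using sigma Spos by simp
    next
      fix z assume z: "z \<in> zeros_op A"
      show "0 \<le> norm (x 0 - z)" by simp
      have "(1 - \<sigma>\<^sup>2) * (m\<^sup>2 * S) \<le> (1 - \<sigma>\<^sup>2) * ((1+\<sigma>)\<^sup>2 * (\<Sum>i=1..k. r i))"
        using mS s2 by (simp add: mult_left_mono)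
      also have "\<dots> = (1+\<sigma>)\<^sup>2 * ((1 - \<sigma>\<^sup>2) * (\<Sum>i=1..k. r i))" by (simp only: mult_ac)
      also have "\<dots> \<le> (1+\<sigma>)\<^sup>2 * (norm (x 0 - z))\<^sup>2"
        using main[OF z] by (rule mult_left_mono) simp
      also have "(1 - \<sigma>\<^sup>2) * (m\<^sup>2 * S) = (1 + \<sigma>) * ((1 - \<sigma>) * (m\<^sup>2 * S))"
        by (simp add: power2_eq_square algebra_simps)
      also have "(1+\<sigma>)\<^sup>2 * (norm (x 0 - z))\<^sup>2 = (1 + \<sigma>) * ((1 + \<sigma>) * (norm (x 0 - z))\<^sup>2)"
        by (simp add: power2_eq_square)
      finally have "(1 - \<sigma>) * (m\<^sup>2 * S) \<le> (1 + \<sigma>) * (norm (x 0 - z))\<^sup>2"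
        using sigma by (simp only: mult_le_cancel_left_pos[of "1+\<sigma>"])
      define Q where "Q = (1 + \<sigma>) / (1 - \<sigma>)"
      have "(1 - \<sigma>) * Q = 1 + \<sigma>" unfolding Q_def using sigma by simp
      then have "(1 - \<sigma>) * (m\<^sup>2 * S) \<le> (1 - \<sigma>) * (Q * (norm (x 0 - z))\<^sup>2)"
        using \<open>(1 - \<sigma>) * (m\<^sup>2 * S) \<le> (1 + \<sigma>) * (norm (x 0 - z))\<^sup>2\<close> by (simp add: mult.assoc[symmetric])
      then have "m\<^sup>2 * S \<le> Q * (norm (x 0 - z))\<^sup>2"
        using sigma by (simp only: mult_le_cancel_left_pos[of "1-\<sigma>"])
      then have "m\<^sup>2 \<le> Q * (norm (x 0 - z))\<^sup>2 / S"
        using Spos by (simp add: pos_le_divide_eq)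
      then have "sqrt (m\<^sup>2) \<le> sqrt (Q * (norm (x 0 - z))\<^sup>2 / S)"
        using real_sqrt_le_mono by blast
      also have "sqrt (Q * (norm (x 0 - z))\<^sup>2 / S) = sqrt Q * norm (x 0 - z) / sqrt S"
        by (simp add: real_sqrt_mult real_sqrt_divide)
      finally show "m \<le> sqrt ((1 + \<sigma>) / (1 - \<sigma>)) * S powr (- 1 / 2) * norm (x 0 - z)"
        using m_nn unfolding Q_def Spow by (simp add: divide_inverse mult_ac)
    qed
  next
    define e where "e = (INF i\<in>{1..k}. eps i)"
    have e_le: "e \<le> eps i" if "i \<in> {1..k}" for i
      unfolding e_def by (rule cINF_lower) (use that in auto)
    have "e * lam i \<le> \<sigma>\<^sup>2 / 2 * r i" if i: "i \<in> {1..k}" for i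
      using e_le[OF i] lampos[OF i] eb[OF i] by (smt (verit) mult.commute mult_right_mono)
    then have eS: "e * S \<le> \<sigma>\<^sup>2 / 2 * (\<Sum>i=1..k. r i)"
      unfolding S_def sum_distrib_left by (intro sum_mono) auto
    show "e \<le> \<sigma>\<^sup>2 / (2 * (1 - \<sigma>\<^sup>2)) * inverse (\<Sum>i=1..k. lam i) * (INF z\<in>zeros_op A. (norm (x 0 - z))\<^sup>2)"
      unfolding S_def[symmetric]
    proof (rule inf_le[OF nz])
      show "0 \<le> \<sigma>\<^sup>2 / (2 * (1 - \<sigma>\<^sup>2)) * inverse S" using s2 Spos by simp
    next
      fix z assume z: "z \<in> zeros_op A"
      show "0 \<le> (norm (x 0 - z))\<^sup>2" by simp
      have "(1 - \<sigma>\<^sup>2) * (e * S) \<le> (1 - \<sigma>\<^sup>2) * (\<sigma>\<^sup>2 / 2 * (\<Sum>i=1..k. r i))"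
        using eS s2 by (simp add: mult_left_mono)
      also have "\<dots> = \<sigma>\<^sup>2 / 2 * ((1 - \<sigma>\<^sup>2) * (\<Sum>i=1..k. r i))" by (simp only: mult_ac)
      also have "\<dots> \<le> \<sigma>\<^sup>2 / 2 * (norm (x 0 - z))\<^sup>2"
        using main[OF z] by (rule mult_left_mono) simp
      finally have "(1 - \<sigma>\<^sup>2) * (e * S) \<le> \<sigma>\<^sup>2 / 2 * (norm (x 0 - z))\<^sup>2" .
      then have "e * S \<le> \<sigma>\<^sup>2 / 2 * (norm (x 0 - z))\<^sup>2 / (1 - \<sigma>\<^sup>2)"
        using s2 by (simp add: pos_le_divide_eq algebra_simps)
      then have "e \<le> \<sigma>\<^sup>2 / 2 * (norm (x 0 - z))\<^sup>2 / (1 - \<sigma>\<^sup>2) / S"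
        unfolding pos_le_divide_eq[OF Spos] .
      moreover have "\<sigma>\<^sup>2 / 2 * (norm (x 0 - z))\<^sup>2 / (1 - \<sigma>\<^sup>2) / S = \<sigma>\<^sup>2 / (2 * (1 - \<sigma>\<^sup>2)) * inverse S * (norm (x 0 - z))\<^sup>2"
        by (simp add: field_simps)
      ultimately show "e \<le> \<sigma>\<^sup>2 / (2 * (1 - \<sigma>\<^sup>2)) * inverse S * (norm (x 0 - z))\<^sup>2"
        by simp
    qed
  qed
qed

end
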